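(* Let $k\ge1$, $m\ge0$, $N_1=n-mk\ge0$, $N_2=m$, let $\eta_1\in\mathbb C$ with $\hbar=k\eta_1$, $t_1=e^{\eta_1/2}$, $q=e^{\hbar/2}=t_1^k$, and $t_n\in\mathbb C^*$. Let $S_0=\bigsqcup_{\ell=1}^{N_2}\{e_{N_1+k(\ell-1)+j}-e_{N_1+k(\ell-1)+j+1}:1\le j\le k-1\}$, so $\mathcal D_0=\{x: x_j-x_{j+1}=\eta_1$ whenever $e_j-e_{j+1}\in S_0\}$, with coordinates $x_1,\dots,x_{N_1}$ and $y_\ell=\frac1k\sum_{s=0}^{k-1}x_{N_1+k\ell-s}$. Then the restriction to $\mathcal D_0$ of $$M_{-e_1}=\sum_{i=1}^n\sum_{\epsilon=\pm1}\prod_{j\ne i}g(\epsilon x_i-x_j;t_1,1)g(\epsilon x_i+x_j;t_1,1)\,g(\epsilon x_i;t_n,1)\,\mathsf T^{-\epsilon\hbar}_{x_i}$$ is well defined and equals $$\overline{M_{-e_1}}=\sum_{i=1}^{N_1}\sum_{\epsilon=\pm1}A_i^\epsilon\,\mathsf T^{-\epsilon\hbar}_{x_i}+\frac{q-q^{-1}}{t_1-t_1^{-1}}\sum_{\ell=1}^{N_2}\sum_{\epsilon=\pm1}B_\ell^\epsilon\,\mathsf T^{-\epsilon\eta_1}_{y_\ell},$$ where $A_i^\epsilon=\prod_{j\le N_1,j\ne i}g(\epsilon x_i-x_j;t_1,1)g(\epsilon x_i+x_j;t_1,1)\prod_{\ell'=1}^{N_2}g(\epsilon x_i-y_{\ell'};q^{1/2}t_1^{1/2},q^{-1/2}t_1^{1/2})g(\epsilon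 x_i+y_{\ell'};q^{1/2}t_1^{1/2},q^{-1/2}t_1^{1/2})\,g(\epsilon x_i;t_n,1)$ and $B_\ell^\epsilon=\prod_{j=1}^{N_1}g(\epsilon y_\ell-x_j;q^{1/2}t_1^{1/2},q^{1/2}t_1^{-1/2})g(\epsilon y_\ell+x_j;q^{1/2}t_1^{1/2},q^{1/2}t_1^{-1/2})\prod_{\ell'\ne\ell}g(\epsilon y_\ell-y_{\ell'};q,1)g(\epsilon y_\ell+y_{\ell'};q,1)\,g(\epsilon y_\ell;q^{1/2}t_1^{-1/2}t_n,q^{1/2}t_1^{-1/2})\,g(2\epsilon y_\ell;qt_1^{-1},1)$.
   Context: $R=B_n$ in $V=\mathbb C^n$ with orthonormal basis $e_i$, coordinates $x_i=(e_i,x)$; simple roots $e_i-e_{i+1}$ ($i<n$), $e_n$. $g(z;a,b)=\frac{ae^z-a^{-1}}{be^z-b^{-1}}$. $\hbar\in\mathbb C\setminus\pi i\mathbb Q$. $\mathsf T^a_z$ is the shift $z\mapsto z+a$; on functions on $V$, $\mathsf T^{-\epsilon\hbar}_{x_i}=\tau(\epsilon e_i)$ where $(\tau(\lambda)f)(x)=f(x-\hbar\lambda)$. With $\overline V=\{x:(\alpha,x)=0\ \forall\alpha\in S_0\}$ and $\bar\lambda$ the orthogonal projection onto $\overline V$, the restriction of $D=\sum_\lambda g_\lambda\tau(\lambda)$ to $\mathcal D_0$ is $\overline D=\sum_{\lambda'}\big(\sum_{\bar\lambda=\lambda'}g_\lambda\big)\big|_{\mathcal D_0}\tau(\lambda')$,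 provided these restricted coefficients are well-defined meromorphic functions on $\mathcal D_0$ (then e.g. $\tau(\epsilon e_i)$ for $i$ in the $\ell$-th block restricts to $\mathsf T^{-\epsilon\eta_1}_{y_\ell}$). *)

theory Defs
  imports Complex_Main
begin

text \<open>Vectors of V = C^n are represented as functions nat => complex supported on {1..n}
  (coordinates x_i = x i, 1-based). The bilinear form is (a,x) = sum_{j=1..n} a j * x j.\<close>

type_synonym cvec = "nat \<Rightarrow> complex"

definition gfun :: "complex \<Rightarrow> complex \<Rightarrow> complex \<Rightarrow> complex" where
  "gfun z a b = (a * exp z - inverse a) / (b * exp z - inverse b)"

definition gok :: "complex \<Rightarrow> complex \<Rightarrow> bool" where
  "gok z b \<longleftrightarrow> b * exp z - inverse b \<noteq> 0"

definition evec :: "nat \<Rightarrow> cvec" where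
  "evec i = (\<lambda>j. if j = i then 1 else 0)"

definition bform :: "nat \<Rightarrow> cvec \<Rightarrow> cvec \<Rightarrow> complex" where
  "bform n a x = (\<Sum>j=1..n. a j * x j)"

text \<open>Indices a with e_a - e_(a+1) in S_0 (here N1 = n - m k).\<close>
definition S0idx :: "nat \<Rightarrow> nat \<Rightarrow> nat \<Rightarrow> nat set" where
  "S0idx n m k = {(n - m*k) + k*(l-1) + j | l j. 1 \<le> l \<and> l \<le> m \<and> 1 \<le> j \<and> j \<le> k - 1}"

definition S0 :: "nat \<Rightarrow> nat \<Rightarrow> nat \<Rightarrow> cvec set" where
  "S0 n m k = {(\<lambda>j. evec a j - evec (a+1) j) | a. a \<in> S0idx n m k}"

definition Vsp :: "nat \<Rightarrow> cvec set" where
  "Vsp n = {v. \<forall>j. j \<notin> {1..n} \<longrightarrow> v j = 0}"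

definition Vbar :: "nat \<Rightarrow> nat \<Rightarrow> nat \<Rightarrow> cvec set" where
  "Vbar n m k = {v \<in> Vsp n. \<forall>\<alpha>\<in>S0 n m k. bform n \<alpha> v = 0}"

definition proj :: "nat \<Rightarrow> nat \<Rightarrow> nat \<Rightarrow> cvec \<Rightarrow> cvec" where
  "proj n m k lam = (THE mu. mu \<in> Vbar n m k \<and>
      (\<forall>v\<in>Vbar n m k. bform n (\<lambda>j. lam j - mu j) v = 0))"

definition D0 :: "nat \<Rightarrow> nat \<Rightarrow> nat \<Rightarrow> complex \<Rightarrow> cvec set" where
  "D0 n m k eta1 = {x. \<forall>a\<in>S0idx n m k. x a - x (a+1) = eta1}"

text \<open>A difference operator sum_{lam in Lam} c lam * tau(lam) is given by a finite set of shifts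
  Lam and coefficients c. Coefficient of tau(lam') in its restriction to D_0, at x in D_0.\<close>
definition restr_coef :: "nat \<Rightarrow> nat \<Rightarrow> nat \<Rightarrow> cvec set \<Rightarrow> (cvec \<Rightarrow> cvec \<Rightarrow> complex)
    \<Rightarrow> cvec \<Rightarrow> cvec \<Rightarrow> complex" where
  "restr_coef n m k Lam c lam' x = (\<Sum>lam\<in>{lam\<in>Lam. proj n m k lam = lam'}. c lam x)"

text \<open>The operator M_{-e_1}: shifts tau(eps e_i) (= T^{-eps hbar}_{x_i}).\<close>
definition signs :: "complex set" where "signs = {1, -1}"

definition MLam :: "nat \<Rightarrow> cvec set" where
  "MLam n = {(\<lambda>j. eps * evec i j) | i eps. i \<in> {1..n} \<and> eps \<in> signs}"

definition Mterm :: "nat \<Rightarrow> complex \<Rightarrow> complex \<Rightarrow> nat \<Rightarrow> complex \<Rightarrow> cvec \<Rightarrow> complex" where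
  "Mterm n t1 tn i eps x =
     (\<Prod>j\<in>{1..n}-{i}. gfun (eps * x i - x j) t1 1 * gfun (eps * x i + x j) t1 1)
       * gfun (eps * x i) tn 1"

definition Mcoef :: "nat \<Rightarrow> complex \<Rightarrow> complex \<Rightarrow> cvec \<Rightarrow> cvec \<Rightarrow> complex" where
  "Mcoef n t1 tn lam x =
     (\<Sum>i=1..n. \<Sum>eps\<in>signs. if lam = (\<lambda>j. eps * evec i j) then Mterm n t1 tn i eps x else 0)"

definition ycoord :: "nat \<Rightarrow> nat \<Rightarrow> nat \<Rightarrow> cvec \<Rightarrow> nat \<Rightarrow> complex" where
  "ycoord n m k x l = (1 / of_nat k) * (\<Sum>s=0..k-1. x ((n - m*k) + k*l - s))"

text \<open>u_l = projection of e_i for i in the l-th block; tau(eps u_l) restricts to T^{-eps eta1}_{y_l}.\<close>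
definition ublock :: "nat \<Rightarrow> nat \<Rightarrow> nat \<Rightarrow> nat \<Rightarrow> cvec" where
  "ublock n m k l = (\<lambda>j. if j \<in> {(n - m*k) + k*(l-1) + 1 .. (n - m*k) + k*l} then 1 / of_nat k else 0)"

text \<open>Square roots: q^(1/2) = exp(hbar/4), t1^(1/2) = exp(eta1/4).\<close>
definition Acoef :: "nat \<Rightarrow> nat \<Rightarrow> nat \<Rightarrow> complex \<Rightarrow> complex \<Rightarrow> nat \<Rightarrow> complex \<Rightarrow> cvec \<Rightarrow> complex" where
  "Acoef n m k eta1 tn i eps x =
    (let hbar = of_nat k * eta1; t1 = exp (eta1/2); qh = exp (hbar/4); t1h = exp (eta1/4);
         N1 = n - m*k; y = ycoord n m k x in
     (\<Prod>j\<in>{1..N1}-{i}. gfun (eps * x i - x j) t1 1 * gfun (eps * x i + x j) t1 1)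
     * (\<Prod>l'=1..m. gfun (eps * x i - y l') (qh * t1h) (t1h / qh)
                 * gfun (eps * x i + y l') (qh * t1h) (t1h / qh))
     * gfun (eps * x i) tn 1)"

definition Bcoef :: "nat \<Rightarrow> nat \<Rightarrow> nat \<Rightarrow> complex \<Rightarrow> complex \<Rightarrow> nat \<Rightarrow> complex \<Rightarrow> cvec \<Rightarrow> complex" where
  "Bcoef n m k eta1 tn l eps x =
    (let hbar = of_nat k * eta1; t1 = exp (eta1/2); q = exp (hbar/2); qh = exp (hbar/4);
         t1h = exp (eta1/4); N1 = n - m*k; y = ycoord n m k x in
     (\<Prod>j=1..N1. gfun (eps * y l - x j) (qh * t1h) (qh / t1h)
               * gfun (eps * y l + x j) (qh * t1h) (qh / t1h))
     * (\<Prod>l'\<in>{1..m}-{l}. gfun (eps * y l - y l') q 1 * gfun (eps * y l + y l') q 1)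
     * gfun (eps * y l) (qh / t1h * tn) (qh / t1h)
     * gfun (2 * eps * y l) (q / t1) 1)"

definition RHScoef :: "nat \<Rightarrow> nat \<Rightarrow> nat \<Rightarrow> complex \<Rightarrow> complex \<Rightarrow> cvec \<Rightarrow> cvec \<Rightarrow> complex" where
  "RHScoef n m k eta1 tn lam' x =
    (let hbar = of_nat k * eta1; t1 = exp (eta1/2); q = exp (hbar/2) in
     (\<Sum>i=1..n - m*k. \<Sum>eps\<in>signs.
         if lam' = (\<lambda>j. eps * evec i j) then Acoef n m k eta1 tn i eps x else 0)
     + (q - inverse q) / (t1 - inverse t1) *
       (\<Sum>l=1..m. \<Sum>eps\<in>signs.
         if lam' = (\<lambda>j. eps * ublock n m k l j) then Bcoef n m k eta1 tn l eps x else 0))"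

text \<open>Genericity: every g-factor occurring on either side has nonzero denominator at x.\<close>
definition generic_pt :: "nat \<Rightarrow> nat \<Rightarrow> nat \<Rightarrow> complex \<Rightarrow> cvec \<Rightarrow> bool" where
  "generic_pt n m k eta1 x \<longleftrightarrow>
    (let hbar = of_nat k * eta1; qh = exp (hbar/4); t1h = exp (eta1/4);
         N1 = n - m*k; y = ycoord n m k x in
     (\<forall>i\<in>{1..n}. \<forall>eps\<in>signs. gok (eps * x i) 1 \<and>
        (\<forall>j\<in>{1..n}-{i}. gok (eps * x i - x j) 1 \<and> gok (eps * x i + x j) 1)) \<and>
     (\<forall>i\<in>{1..N1}. \<forall>eps\<in>signs. \<forall>l\<in>{1..m}.
        gok (eps * x i - y l) (t1h / qh) \<and> gok (eps * x i + y l) (t1h / qh)) \<and>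
     (\<forall>l\<in>{1..m}. \<forall>eps\<in>signs.
        (\<forall>j\<in>{1..N1}. gok (eps * y l - x j) (qh / t1h) \<and> gok (eps * y l + x j) (qh / t1h)) \<and>
        (\<forall>l'\<in>{1..m}-{l}. gok (eps * y l - y l') 1 \<and> gok (eps * y l + y l') 1) \<and>
        gok (eps * y l) (qh / t1h) \<and> gok (2 * eps * y l) 1))"

end

theory Submission
  imports Defs "HOL-Analysis.Analysis"
begin

lemma gfun_shift: "gfun (u + s) a b = gfun u (a * exp (s/2)) (b * exp (s/2))"
proof -
  define F where "F = exp (s/2)"
  have E: "exp (u+s) = F * F * exp u"
    unfolding F_def by (simp only: exp_add[symmetric]) (rule arg_cong[of _ _ exp], simp add: field_simps)
  have ne: "F \<noteq> 0" unfolding F_def by simp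
  have n1: "(a * F * exp u - inverse (a * F)) * F = a * exp (u+s) - inverse a"
    unfolding E using ne by (simp add: algebra_simps inverse_mult_distrib)
  have n2: "(b * F * exp u - inverse (b * F)) * F = b * exp (u+s) - inverse b"
    unfolding E using ne by (simp add: algebra_simps inverse_mult_distrib)
  have "gfun u (a * F) (b * F) = ((a * F * exp u - inverse (a * F)) * F) / ((b * F * exp u - inverse (b * F)) * F)"
    unfolding gfun_def using ne by simp
  also have "\<dots> = gfun (u+s) a b" unfolding n1 n2 gfun_def ..
  finally show ?thesis unfolding F_def by simp
qed

lemma gzero: "gfun (-e) (exp (e/2)) 1 = 0"
proof -
  have "exp (e/2) * exp (-e) = inverse (exp (e/2))"
    by (simp add: exp_add[symmetric] exp_minus[symmetric])
  thus ?thesis unfolding gfun_def by simp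
qed

lemma tel:
  assumes "exp z \<noteq> 1" "\<forall>s<K. exp (z + of_nat s * e) \<noteq> 1"
  shows "(\<Prod>s<K. gfun (z + of_nat s * e) (exp (e/2)) 1) = gfun z (exp (of_nat K * e/2)) 1"
  using assms(2)
proof (induction K)
  case 0
  then show ?case using assms(1) by (simp add: gfun_def)
next
  case (Suc K)
  hence IH: "(\<Prod>s<K. gfun (z + of_nat s * e) (exp (e/2)) 1) = gfun z (exp (of_nat K * e/2)) 1"
    by auto
  have nz: "exp (z + of_nat K * e) \<noteq> 1" using Suc.prems by auto
  define A where "A = exp (of_nat K * e/2)"
  define T where "T = exp (e/2)"
  have A2: "exp (z + of_nat K * e) = A * A * exp z"
    unfolding A_def by (simp only: exp_add[symmetric]) (rule arg_cong[of _ _ exp], simp add: field_simps)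
  have TA: "exp (of_nat (Suc K) * e/2) = T * A"
    unfolding A_def T_def by (simp only: exp_add[symmetric]) (rule arg_cong[of _ _ exp], simp add: field_simps)
  have Anz: "A \<noteq> 0" "T \<noteq> 0" unfolding A_def T_def by auto
  have d1: "exp z - 1 \<noteq> 0" using assms(1) by simp
  have d2: "A * A * exp z - 1 \<noteq> 0" using nz A2 by simp
  have "(\<Prod>s<Suc K. gfun (z + of_nat s * e) (exp (e/2)) 1)
      = gfun z A 1 * gfun (z + of_nat K * e) T 1" using IH unfolding A_def T_def by simp
  also have "\<dots> = gfun z (T*A) 1"
  proof -
    have g1: "gfun z A 1 = (A*A*exp z - 1) / (A * (exp z - 1))"
      unfolding gfun_def using Anz by (simp add: field_simps)
    have g2: "gfun (z + of_nat K * e) T 1 = (T*A*A*exp z - inverse T) / (A*A*exp z - 1)"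
      unfolding gfun_def A2 by (simp add: algebra_simps)
    have g3: "(T*A*A*exp z - inverse T) / A = T*A*exp z - inverse (T*A)"
      using Anz by (simp add: field_simps)
    have "gfun z A 1 * gfun (z + of_nat K * e) T 1 = (T*A*A*exp z - inverse T) / A / (exp z - 1)"
    proof -
      have "(A*A*exp z - 1) / (A * (exp z - 1)) * ((T*A*A*exp z - inverse T) / (A*A*exp z - 1))
           = (T*A*A*exp z - inverse T) / (A * (exp z - 1))" using d2 by simp
      thus ?thesis unfolding g1 g2 by (simp add: divide_divide_eq_left mult.commute)
    qed
    also have "\<dots> = gfun z (T*A) 1" unfolding g3 gfun_def by simp
    finally show ?thesis .
  qed
  finally show ?case using TA by simp
qed

locale S =
  fixes n m k :: nat and eta tn :: complex and x :: cvec
  assumes k1: "k \<ge> 1" and mk: "m*k \<le> n" and xD: "x \<in> D0 n m k eta"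
    and gen: "generic_pt n m k eta x" and eta_ne: "exp eta \<noteq> 1"
begin

definition "N1 = n - m*k"
definition "pos l r = N1 + k*(l-1) + r"
definition "y = ycoord n m k x"

lemma n_eq: "n = N1 + m*k" using mk unfolding N1_def by simp

lemma kl: "1 \<le> l \<Longrightarrow> k*(l-1) + k = k*l"
  by (cases l) auto

lemma pos_le: "1 \<le> l \<Longrightarrow> l \<le> m \<Longrightarrow> r \<le> k \<Longrightarrow> pos l r \<le> n"
proof -
  assume a: "1 \<le> l" "l \<le> m" "r \<le> k"
  have "k*(l-1) + r \<le> k*l" using kl[OF a(1)] a(3) by simp
  also have "\<dots> \<le> m*k" using a(2) by (simp add: mult.commute)
  finally show ?thesis unfolding pos_def using n_eq by simp
qed

lemma pos_gt: "1 \<le> r \<Longrightarrow> N1 < pos l r" unfolding pos_def by simp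

lemma pos_Suc: "pos l (Suc r) = Suc (pos l r)" unfolding pos_def by simp

lemma pos_S0: "1 \<le> l \<Longrightarrow> l \<le> m \<Longrightarrow> 1 \<le> r \<Longrightarrow> r < k \<Longrightarrow> pos l r \<in> S0idx n m k"
  unfolding S0idx_def pos_def N1_def by (rule CollectI, rule exI[of _ l], rule exI[of _ r]) auto

lemma S0_char: "a \<in> S0idx n m k \<Longrightarrow> \<exists>l r. 1 \<le> l \<and> l \<le> m \<and> 1 \<le> r \<and> r < k \<and> a = pos l r"
  unfolding S0idx_def pos_def N1_def by auto

lemma xdiff: "1 \<le> l \<Longrightarrow> l \<le> m \<Longrightarrow> 1 \<le> r \<Longrightarrow> r < k \<Longrightarrow> x (pos l r) - x (pos l (Suc r)) = eta"
  using xD pos_S0[of l r] unfolding D0_def pos_Suc by auto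

lemma xpos: "1 \<le> l \<Longrightarrow> l \<le> m \<Longrightarrow> 1 \<le> r \<Longrightarrow> r \<le> k \<Longrightarrow> x (pos l r) = x (pos l 1) - of_nat (r-1) * eta"
proof (induction r)
  case 0 thus ?case by simp
next
  case (Suc r)
  show ?case
  proof (cases "r = 0")
    case True thus ?thesis by simp
  next
    case False
    hence "x (pos l r) = x (pos l 1) - of_nat (r-1) * eta" using Suc by auto
    moreover have "x (pos l r) - x (pos l (Suc r)) = eta" using Suc False by (intro xdiff) auto
    ultimately show ?thesis using False by (cases r) (auto simp: algebra_simps)
  qed
qed

lemma ysum: "1 \<le> l \<Longrightarrow> l \<le> m \<Longrightarrow> y l = x (pos l 1) - eta * (of_nat k - 1) / 2"
proof -
  assume l: "1 \<le> l" "l \<le> m"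
  obtain k' where k': "k = Suc k'" using k1 by (cases k) auto
  have "(\<Sum>s=0..k-1. x (N1 + k*l - s)) = (\<Sum>s=0..k'. x (N1 + k*l - (k' + 0 - s)))"
    using k' by (subst sum.atLeastAtMost_rev) simp
  also have "\<dots> = (\<Sum>s=0..k'. x (pos l 1) - of_nat s * eta)"
  proof (rule sum.cong[OF refl])
    fix s assume s: "s \<in> {0..k'}"
    have "N1 + k*l - (k' + 0 - s) = pos l (Suc s)"
      using kl[OF l(1)] s k' unfolding pos_def by auto
    thus "x (N1 + k*l - (k' + 0 - s)) = x (pos l 1) - of_nat s * eta"
      using xpos[OF l, of "Suc s"] s k' by simp
  qed
  also have "\<dots> = of_nat (Suc k') * x (pos l 1) - eta * (\<Sum>s=0..k'. of_nat s)"
    by (simp add: sum_subtractf sum_distrib_left mult.commute)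
  finally have S0: "(\<Sum>s=0..k-1. x (N1 + k*l - s)) = of_nat (Suc k') * x (pos l 1) - eta * (\<Sum>s=0..k'. of_nat s)" .
  have G: "(\<Sum>s=0..k'. of_nat s) = (of_nat k' * (of_nat k' + 1) / 2 :: complex)"
    using double_gauss_sum[of k', where 'a=complex] by (simp add: field_simps)
  have S: "(\<Sum>s=0..k-1. x (N1 + k*l - s)) = of_nat k * x (pos l 1) - eta * (of_nat k' * (of_nat k' + 1) / 2)"
    using S0 unfolding G k'[symmetric] .
  have "y l = (1/of_nat k) * (\<Sum>s=0..k-1. x (N1 + k*l - s))" unfolding y_def ycoord_def N1_def by simp
  also have "\<dots> = (1/of_nat k) * (of_nat k * x (pos l 1) - eta * (of_nat k' * (of_nat k' + 1) / 2))"
    by (simp only: S)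
  also have "\<dots> = x (pos l 1) - eta * (of_nat k - 1) / 2"
  proof -
    have ne: "of_nat k' + 1 \<noteq> (0::complex)"
      by (metis of_nat_Suc of_nat_eq_0_iff nat.distinct(1) add.commute)
    have kk: "(of_nat k :: complex) = of_nat k' + 1" using k' by simp
    have r: "(of_nat k' + 1) * x (pos l 1) - eta * (of_nat k' * (of_nat k' + 1) / 2)
        = (of_nat k' + 1) * (x (pos l 1) - eta * of_nat k' / 2)" by (simp add: algebra_simps)
    show ?thesis unfolding kk r using ne by simp
  qed
  finally show ?thesis .
qed

lemma xblock: "1 \<le> l \<Longrightarrow> l \<le> m \<Longrightarrow> 1 \<le> r \<Longrightarrow> r \<le> k \<Longrightarrow>
   x (pos l r) = y l + eta * ((of_nat k + 1)/2 - of_nat r)"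
proof -
  assume a: "1 \<le> l" "l \<le> m" "1 \<le> r" "r \<le> k"
  have h1: "x (pos l r) = x (pos l 1) - (of_nat r - 1) * eta" using xpos[OF a] a by (simp add: of_nat_diff)
  have h2: "x (pos l 1) = y l + eta * (of_nat k - 1) / 2" using ysum[OF a(1,2)] by simp
  show ?thesis unfolding h1 h2 by (simp add: field_simps)
qed

lemma pos_surj: "j \<in> {N1+1..n} \<Longrightarrow> \<exists>l r. 1 \<le> l \<and> l \<le> m \<and> 1 \<le> r \<and> r \<le> k \<and> j = pos l r"
proof -
  assume j: "j \<in> {N1+1..n}"
  define p where "p = j - N1 - 1"
  have p: "p < m*k" using j n_eq unfolding p_def by auto
  have "p div k < m" using p k1 by (simp add: div_less_iff_less_mult)
  moreover have "p mod k < k" using k1 by simp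
  moreover have "j = pos (p div k + 1) (p mod k + 1)"
    using j unfolding pos_def p_def by simp
  ultimately show ?thesis by (intro exI[of _ "p div k + 1"] exI[of _ "p mod k + 1"]) auto
qed

lemma pos_inj: "1 \<le> r \<Longrightarrow> r \<le> k \<Longrightarrow> 1 \<le> r' \<Longrightarrow> r' \<le> k \<Longrightarrow> 1 \<le> l \<Longrightarrow> 1 \<le> l'
   \<Longrightarrow> pos l r = pos l' r' \<Longrightarrow> l = l' \<and> r = r'"
proof -
  assume a: "1 \<le> r" "r \<le> k" "1 \<le> r'" "r' \<le> k" "1 \<le> l" "1 \<le> l'" "pos l r = pos l' r'"
  obtain a b a' b' where ab: "l = Suc a" "r = Suc b" "l' = Suc a'" "r' = Suc b'"
    using a by (metis Suc_le_D One_nat_def)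
  hence e: "k*a + b = k*a' + b'" using a(7) unfolding pos_def by simp
  have bk: "b < k" "b' < k" using a ab by auto
  have "(k*a + b) div k = a" "(k*a + b) mod k = b" using bk by auto
  moreover have "(k*a' + b') div k = a'" "(k*a' + b') mod k = b'" using bk by auto
  ultimately show ?thesis using e ab by metis
qed

end

lemma bform_diff: "bform n (\<lambda>j. a j - b j) v = bform n a v - bform n b v"
  unfolding bform_def by (simp add: sum_subtractf algebra_simps)
lemma bform_scale: "bform n (\<lambda>j. c * a j) v = c * bform n a v"
  unfolding bform_def by (simp add: sum_distrib_left algebra_simps)
lemma bform_evec: "i \<in> {1..n} \<Longrightarrow> bform n (evec i) v = v i"
  unfolding bform_def evec_def
  by (subst sum.cong[OF refl, where h="\<lambda>j. if j = i then v j else 0"]) auto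
lemma bform_evec2: "i \<in> {1..n} \<Longrightarrow> bform n v (evec i) = v i"
  unfolding bform_def evec_def
  by (subst sum.cong[OF refl, where h="\<lambda>j. if j = i then v j else 0"]) auto

context S begin

lemma blk_img: "{N1+1..n} = (\<lambda>(l,r). pos l r) ` ({1..m} \<times> {1..k})"
proof
  show "{N1+1..n} \<subseteq> (\<lambda>(l,r). pos l r) ` ({1..m} \<times> {1..k})"
  proof
    fix j assume "j \<in> {N1+1..n}"
    then obtain l r where "1 \<le> l \<and> l \<le> m \<and> 1 \<le> r \<and> r \<le> k \<and> j = pos l r" using pos_surj by blast
    thus "j \<in> (\<lambda>(l,r). pos l r) ` ({1..m} \<times> {1..k})" by force
  qed
  show "(\<lambda>(l,r). pos l r) ` ({1..m} \<times> {1..k}) \<subseteq> {N1+1..n}"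
  proof
    fix j assume "j \<in> (\<lambda>(l,r). pos l r) ` ({1..m} \<times> {1..k})"
    then obtain p where p: "p \<in> {1..m} \<times> {1..k}" "j = (\<lambda>(l,r). pos l r) p" by (rule imageE)
    obtain l r where lr: "l \<in> {1..m}" "r \<in> {1..k}" "j = pos l r" using p by (cases p) auto
    have "pos l r \<le> n" using lr by (intro pos_le) auto
    moreover have "N1 < pos l r" using lr by (intro pos_gt) auto
    ultimately show "j \<in> {N1+1..n}" using lr by simp
  qed
qed

lemma blk_inj: "inj_on (\<lambda>(l,r). pos l r) ({1..m} \<times> {1..k})"
  unfolding inj_on_def using pos_inj by auto

lemma blocks_sum: "sum f {N1+1..n} = (\<Sum>l=1..m. \<Sum>r=1..k. f (pos l r))"
  unfolding blk_img by (subst sum.reindex[OF blk_inj]) (simp add: sum.cartesian_product comp_def case_prod_unfold)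

lemma blocks_prod: "prod f {N1+1..n} = (\<Prod>l=1..m. \<Prod>r=1..k. f (pos l r))"
  unfolding blk_img by (subst prod.reindex[OF blk_inj]) (simp add: prod.cartesian_product comp_def case_prod_unfold)

lemma split_1n: "{1..n} = {1..N1} \<union> {N1+1..n}" "{1..N1} \<inter> {N1+1..n} = {}"
  using n_eq by auto

lemma sum_split: "sum f {1..n} = sum f {1..N1} + (\<Sum>l=1..m. \<Sum>r=1..k. f (pos l r))"
  by (subst split_1n(1), subst sum.union_disjoint) (auto simp: blocks_sum[simplified])

lemma prod_split: "prod f {1..n} = prod f {1..N1} * (\<Prod>l=1..m. \<Prod>r=1..k. f (pos l r))"
  by (subst split_1n(1), subst prod.union_disjoint) (auto simp: blocks_prod[simplified])

lemma S0_range: "a \<in> S0idx n m k \<Longrightarrow> a \<in> {N1+1..n} \<and> a+1 \<in> {N1+1..n}"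
proof -
  assume "a \<in> S0idx n m k"
  then obtain l r where lr: "1 \<le> l" "l \<le> m" "1 \<le> r" "r < k" "a = pos l r" using S0_char by blast
  have "pos l (Suc r) \<le> n" using lr by (intro pos_le) auto
  thus ?thesis using lr pos_gt[of r l] pos_Suc by auto
qed

lemma Vbar_iff: "v \<in> Vbar n m k \<longleftrightarrow> v \<in> Vsp n \<and> (\<forall>a\<in>S0idx n m k. v a = v (a+1))"
proof -
  have "bform n (\<lambda>j. evec a j - evec (a+1) j) v = v a - v (a+1)" if "a \<in> S0idx n m k" for a
    using S0_range[OF that] n_eq by (simp add: bform_diff bform_evec)
  thus ?thesis unfolding Vbar_def S0_def by auto
qed

lemma Vbar_block: "v \<in> Vbar n m k \<Longrightarrow> 1 \<le> l \<Longrightarrow> l \<le> m \<Longrightarrow> 1 \<le> r \<Longrightarrow> r \<le> k \<Longrightarrow> v (pos l r) = v (pos l 1)"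
proof (induction r)
  case 0 thus ?case by simp
next
  case (Suc r)
  show ?case
  proof (cases "r = 0")
    case True thus ?thesis by simp
  next
    case False
    have "pos l r \<in> S0idx n m k" using Suc False by (intro pos_S0) auto
    hence "v (pos l r) = v (pos l (Suc r))" using Suc.prems(1) Vbar_iff pos_Suc by auto
    thus ?thesis using Suc False by auto
  qed
qed

lemma ublock_pos: "1 \<le> l \<Longrightarrow> 1 \<le> l' \<Longrightarrow> 1 \<le> r \<Longrightarrow> r \<le> k \<Longrightarrow>
   ublock n m k l (pos l' r) = (if l' = l then 1 / of_nat k else 0)"
proof -
  assume a: "1 \<le> l" "1 \<le> l'" "1 \<le> r" "r \<le> k"
  have "pos l' r \<in> {N1 + k*(l-1) + 1 .. N1 + k*l} \<longleftrightarrow> l' = l"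
  proof
    assume m: "pos l' r \<in> {N1 + k*(l-1) + 1 .. N1 + k*l}"
    define r'' where "r'' = pos l' r - (N1 + k*(l-1))"
    have "pos l' r = pos l r''" "1 \<le> r''" "r'' \<le> k"
      using m kl[OF a(1)] unfolding r''_def pos_def by auto
    thus "l' = l" using pos_inj a by metis
  next
    assume "l' = l" thus "pos l' r \<in> {N1 + k*(l-1) + 1 .. N1 + k*l}"
      using a kl[OF a(1)] unfolding pos_def by auto
  qed
  thus ?thesis unfolding ublock_def N1_def by simp
qed

lemma ublock_D: "1 \<le> l \<Longrightarrow> j \<le> N1 \<Longrightarrow> ublock n m k l j = 0"
  unfolding ublock_def N1_def by auto

lemma ublock_out: "j \<notin> {1..n} \<Longrightarrow> 1 \<le> l \<Longrightarrow> l \<le> m \<Longrightarrow> ublock n m k l j = 0"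
proof -
  assume a: "j \<notin> {1..n}" "1 \<le> l" "l \<le> m"
  have "pos l k \<le> n" using a by (intro pos_le) auto
  hence "N1 + k*l \<le> n" using kl[OF a(2)] unfolding pos_def by simp
  thus ?thesis using a unfolding ublock_def N1_def by auto
qed

lemma evec_Vbar: "i \<in> {1..N1} \<Longrightarrow> (\<lambda>j. c * evec i j) \<in> Vbar n m k"
  unfolding Vbar_iff Vsp_def using S0_range unfolding evec_def using n_eq by fastforce

lemma ublock_Vbar: "1 \<le> l \<Longrightarrow> l \<le> m \<Longrightarrow> (\<lambda>j. c * ublock n m k l j) \<in> Vbar n m k"
  unfolding Vbar_iff Vsp_def
proof (intro conjI ballI CollectI allI impI)
  fix j assume "1 \<le> l" "l \<le> m" "j \<notin> {1..n}" thus "c * ublock n m k l j = 0" using ublock_out by simp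
next
  fix a assume l: "1 \<le> l" "l \<le> m" and "a \<in> S0idx n m k"
  then obtain l' r where lr: "1 \<le> l'" "l' \<le> m" "1 \<le> r" "r < k" "a = pos l' r" using S0_char by blast
  have "a + 1 = pos l' (Suc r)" using lr pos_Suc by simp
  thus "c * ublock n m k l a = c * ublock n m k l (a + 1)"
    using lr l ublock_pos[of l l' r] ublock_pos[of l l' "Suc r"] by simp
qed

lemma bform_ublock: "1 \<le> l \<Longrightarrow> l \<le> m \<Longrightarrow> bform n v (ublock n m k l) = (1/of_nat k) * (\<Sum>r=1..k. v (pos l r))"
proof -
  assume l: "1 \<le> l" "l \<le> m"
  have "bform n v (ublock n m k l) = (\<Sum>j=1..N1. v j * ublock n m k l j)
        + (\<Sum>l'=1..m. \<Sum>r=1..k. v (pos l' r) * ublock n m k l (pos l' r))"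
    unfolding bform_def by (rule sum_split)
  also have "(\<Sum>j=1..N1. v j * ublock n m k l j) = 0" using ublock_D l by simp
  also have "(\<Sum>l'=1..m. \<Sum>r=1..k. v (pos l' r) * ublock n m k l (pos l' r))
     = (\<Sum>l'=1..m. if l' = l then (\<Sum>r=1..k. v (pos l r) * (1/of_nat k)) else 0)"
  proof (rule sum.cong[OF refl])
    fix l' assume l': "l' \<in> {1..m}"
    have "(\<Sum>r=1..k. v (pos l' r) * ublock n m k l (pos l' r)) = (\<Sum>r=1..k. if l' = l then v (pos l r) * (1/of_nat k) else 0)"
    proof (rule sum.cong[OF refl])
      fix r assume "r \<in> {1..k}"
      thus "v (pos l' r) * ublock n m k l (pos l' r) = (if l' = l then v (pos l r) * (1/of_nat k) else 0)"
        using ublock_pos[of l l' r] l l' by simp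
    qed
    thus "(\<Sum>r=1..k. v (pos l' r) * ublock n m k l (pos l' r)) = (if l' = l then (\<Sum>r=1..k. v (pos l r) * (1/of_nat k)) else 0)"
      by simp
  qed
  also have "\<dots> = (\<Sum>r=1..k. v (pos l r) * (1/of_nat k))" using l by simp
  finally show ?thesis by (simp add: sum_distrib_left mult.commute)
qed

lemma Vbar_diff: "a \<in> Vbar n m k \<Longrightarrow> b \<in> Vbar n m k \<Longrightarrow> (\<lambda>j. a j - b j) \<in> Vbar n m k"
  unfolding Vbar_iff Vsp_def by simp

lemma proj_eq:
  assumes mu: "mu \<in> Vbar n m k" and orth: "\<forall>v\<in>Vbar n m k. bform n (\<lambda>j. lam j - mu j) v = 0"
  shows "proj n m k lam = mu"
  unfolding proj_def
proof (rule the_equality)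
  show "mu \<in> Vbar n m k \<and> (\<forall>v\<in>Vbar n m k. bform n (\<lambda>j. lam j - mu j) v = 0)" using mu orth by simp
next
  fix mu' assume h: "mu' \<in> Vbar n m k \<and> (\<forall>v\<in>Vbar n m k. bform n (\<lambda>j. lam j - mu' j) v = 0)"
  define d where "d = (\<lambda>j. mu' j - mu j)"
  have dV: "d \<in> Vbar n m k" unfolding d_def using h mu by (intro Vbar_diff) auto
  have dO: "bform n d v = 0" if "v \<in> Vbar n m k" for v
  proof -
    have e: "(\<lambda>j. (lam j - mu j) - (lam j - mu' j)) = d" unfolding d_def by (simp add: fun_eq_iff)
    have "bform n d v = bform n (\<lambda>j. lam j - mu j) v - bform n (\<lambda>j. lam j - mu' j) v"
      unfolding e[symmetric] by (rule bform_diff)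
    thus ?thesis using h orth that by simp
  qed
  have "d j = 0" for j
  proof (cases "j \<in> {1..n}")
    case False
    have "d \<in> Vsp n" using dV unfolding Vbar_def by blast
    thus ?thesis using False unfolding Vsp_def by blast
  next
    case True
    show ?thesis
    proof (cases "j \<le> N1")
      case True
      hence "bform n d (\<lambda>i. 1 * evec j i) = 0" using \<open>j \<in> {1..n}\<close> by (intro dO evec_Vbar) auto
      thus ?thesis using bform_evec2[of j n d] \<open>j \<in> {1..n}\<close> by simp
    next
      case False
      then obtain l r where lr: "1 \<le> l" "l \<le> m" "1 \<le> r" "r \<le> k" "j = pos l r"
      proof -
        have "j \<in> {N1+1..n}" using False \<open>j \<in> {1..n}\<close> by simp
        from pos_surj[OF this] show ?thesis using that by blast
      qed
      have "bform n d (\<lambda>i. 1 * ublock n m k l i) = 0" using lr by (intro dO ublock_Vbar) auto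
      hence "(1/of_nat k) * (\<Sum>r=1..k. d (pos l r)) = 0" using bform_ublock lr by simp
      moreover have "(\<Sum>r=1..k. d (pos l r)) = (\<Sum>r=1..k. d (pos l 1))"
        by (rule sum.cong[OF refl], rule Vbar_block[OF dV lr(1,2)]) auto
      moreover have "(\<Sum>r=1..k. d (pos l 1)) = of_nat k * d (pos l 1)" by simp
      ultimately have "d (pos l 1) = 0" using k1 by simp
      thus ?thesis using Vbar_block[OF dV lr(1-4)] lr(5) by simp
    qed
  qed
  thus "mu' = mu" unfolding d_def by (simp add: fun_eq_iff)
qed

lemma proj_D: "i \<in> {1..N1} \<Longrightarrow> proj n m k (\<lambda>j. c * evec i j) = (\<lambda>j. c * evec i j)"
proof -
  assume i: "i \<in> {1..N1}"
  show ?thesis by (rule proj_eq[OF evec_Vbar[OF i]]) (simp add: bform_def)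
qed

lemma proj_B: "1 \<le> l \<Longrightarrow> l \<le> m \<Longrightarrow> 1 \<le> r \<Longrightarrow> r \<le> k \<Longrightarrow>
   proj n m k (\<lambda>j. c * evec (pos l r) j) = (\<lambda>j. c * ublock n m k l j)"
proof (rule proj_eq)
  assume a: "1 \<le> l" "l \<le> m" "1 \<le> r" "r \<le> k"
  show "(\<lambda>j. c * ublock n m k l j) \<in> Vbar n m k" by (rule ublock_Vbar[OF a(1,2)])
  show "\<forall>v\<in>Vbar n m k. bform n (\<lambda>j. c * evec (pos l r) j - c * ublock n m k l j) v = 0"
  proof
    fix v assume v: "v \<in> Vbar n m k"
    have pr: "pos l r \<in> {1..n}" using a pos_le pos_gt[of r l] by auto
    have "bform n (\<lambda>j. c * evec (pos l r) j - c * ublock n m k l j) v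
        = c * v (pos l r) - c * bform n (ublock n m k l) v"
      by (simp only: bform_diff bform_scale bform_evec[OF pr])
    also have "bform n (ublock n m k l) v = bform n v (ublock n m k l)" unfolding bform_def by (simp add: mult.commute)
    also have "\<dots> = (1/of_nat k) * (\<Sum>r=1..k. v (pos l r))" using a bform_ublock by simp
    also have "(\<Sum>r=1..k. v (pos l r)) = (\<Sum>r=1..k. v (pos l 1))"
      by (rule sum.cong[OF refl], rule Vbar_block[OF v a(1,2)]) auto
    also have "(\<Sum>r=1..k. v (pos l 1)) = of_nat k * v (pos l 1)" by simp
    finally show "bform n (\<lambda>j. c * evec (pos l r) j - c * ublock n m k l j) v = 0"
      using Vbar_block[OF v a] k1 by simp
  qed
qed

end

definition Hf :: "nat \<Rightarrow> complex \<Rightarrow> complex \<Rightarrow> complex" where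
  "Hf K e u = gfun u (exp (of_nat K*e/4) * exp (e/4)) (exp (e/4) / exp (of_nat K*e/4))"

lemma telH:
  assumes K: "K \<ge> 1" and nd: "\<forall>r\<in>{1..K}. exp (u - e*((of_nat K+1)/2 - of_nat r)) \<noteq> 1"
  shows "(\<Prod>r=1..K. gfun (u - e*((of_nat K+1)/2 - of_nat r)) (exp (e/2)) 1) = Hf K e u"
proof -
  define z0 where "z0 = u - e*(of_nat K - 1)/2"
  have "(\<Prod>r=1..K. gfun (u - e*((of_nat K+1)/2 - of_nat r)) (exp (e/2)) 1)
      = (\<Prod>s<K. gfun (u - e*((of_nat K+1)/2 - of_nat (Suc s))) (exp (e/2)) 1)"
    using prod.atLeast1_atMost_eq[of "\<lambda>r. gfun (u - e*((of_nat K+1)/2 - of_nat r)) (exp (e/2)) 1" K] by simp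
  also have "\<dots> = (\<Prod>s<K. gfun (z0 + of_nat s * e) (exp (e/2)) 1)"
    by (rule prod.cong[OF refl]) (simp add: z0_def field_simps)
  also have "\<dots> = gfun z0 (exp (of_nat K * e/2)) 1"
  proof (rule tel)
    have "exp (u - e*((of_nat K+1)/2 - of_nat (1::nat))) \<noteq> 1" using bspec[OF nd, of 1] K by simp
    moreover have "u - e*((of_nat K+1)/2 - of_nat (1::nat)) = z0" unfolding z0_def by (simp add: field_simps)
    ultimately show "exp z0 \<noteq> 1" by simp
    show "\<forall>s<K. exp (z0 + of_nat s * e) \<noteq> 1"
    proof (intro allI impI)
      fix s assume "s < K"
      hence "Suc s \<in> {1..K}" by simp
      hence "exp (u - e*((of_nat K+1)/2 - of_nat (Suc s))) \<noteq> 1" using nd by blast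
      moreover have "u - e*((of_nat K+1)/2 - of_nat (Suc s)) = z0 + of_nat s * e"
        unfolding z0_def by (simp add: field_simps)
      ultimately show "exp (z0 + of_nat s * e) \<noteq> 1" by simp
    qed
  qed
  also have "\<dots> = Hf K e u"
  proof -
    define s where "s = e*(of_nat K - 1)/2"
    have u: "u = z0 + s" unfolding z0_def s_def by simp
    have a: "exp (of_nat K*e/4) * exp (e/4) * exp (s/2) = exp (of_nat K * e/2)"
      unfolding s_def by (simp only: exp_add[symmetric]) (rule arg_cong[of _ _ exp], simp add: field_simps)
    have b: "exp (e/4) / exp (of_nat K*e/4) * exp (s/2) = 1"
    proof -
      have "exp (e/4) / exp (of_nat K*e/4) * exp (s/2) = exp (e/4 - of_nat K*e/4 + s/2)"
        by (simp only: exp_add exp_diff)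
      also have "e/4 - of_nat K*e/4 + s/2 = 0" unfolding s_def by (simp add: field_simps)
      finally show ?thesis by simp
    qed
    show ?thesis unfolding Hf_def u gfun_shift a b ..
  qed
  finally show ?thesis .
qed

lemma OBC:
  fixes e :: complex and K :: nat
  assumes K: "K \<ge> 1" and nde: "exp e \<noteq> 1"
  shows "gfun e (exp (of_nat (K-1) * e/2)) 1
     = (exp (of_nat K*e/2) - inverse (exp (of_nat K*e/2))) / (exp (e/2) - inverse (exp (e/2)))"
proof -
  define T where "T = exp (e/2)"
  define Q where "Q = exp (of_nat K*e/2)"
  have T0: "T \<noteq> 0" "Q \<noteq> 0" unfolding T_def Q_def by auto
  have eT: "exp e = T*T" unfolding T_def by (simp only: exp_add[symmetric]) (rule arg_cong[of _ _ exp], simp)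
  have A: "exp (of_nat (K-1) * e/2) = Q / T" unfolding Q_def T_def
    by (simp only: exp_diff[symmetric]) (rule arg_cong[of _ _ exp], use K in \<open>simp add: of_nat_diff field_simps\<close>)
  have TT: "T*T - 1 \<noteq> 0" using nde eT by simp
  have TT': "T - inverse T \<noteq> 0"
  proof
    assume "T - inverse T = 0"
    hence "T*T - 1 = 0" using T0 by (simp add: field_simps)
    thus False using TT by simp
  qed
  have "gfun e (Q/T) 1 = (Q/T*(T*T) - T/Q) / (T*T - 1)" unfolding gfun_def eT by simp
  also have "\<dots> = (Q - inverse Q) / (T - inverse T)"
    using T0 TT TT' by (simp add: field_simps)
  finally show ?thesis unfolding A[symmetric] Q_def[symmetric] T_def[symmetric] .
qed

lemma OB:
  fixes eps Y e w :: complex and K r0 :: nat and X :: "nat \<Rightarrow> complex"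
  assumes K: "K \<ge> 1" and eps: "eps = 1 \<or> eps = -1" and r0: "r0 = (if eps = 1 then 1 else K)"
    and X: "\<forall>r\<in>{1..K}. X r = Y + e*((of_nat K + 1)/2 - of_nat r)"
    and w: "w = eps*Y + e*(of_nat K - 1)/2"
    and nd: "\<forall>r\<in>{1..K}-{r0}. exp (w - X r) \<noteq> 1 \<and> exp (w + X r) \<noteq> 1"
    and nd2: "exp (2*eps*Y) \<noteq> 1" and nde: "exp e \<noteq> 1"
  shows "(\<Prod>r\<in>{1..K}-{r0}. gfun (w - X r) (exp (e/2)) 1 * gfun (w + X r) (exp (e/2)) 1)
    = (exp (of_nat K*e/2) - inverse (exp (of_nat K*e/2))) / (exp (e/2) - inverse (exp (e/2)))
      * gfun (2*eps*Y) (exp (of_nat K*e/2) / exp (e/2)) 1"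
proof -
  define G where "G = (\<lambda>z. gfun z (exp (e/2)) 1)"
  define P1 where "P1 = (\<Prod>s<K-1. G (e + of_nat s * e))"
  define P2 where "P2 = (\<Prod>s<K-1. G (2*eps*Y + of_nat s * e))"
  have wm: "w - X r = (eps - 1)*Y + e*(of_nat r - 1)" if "r \<in> {1..K}" for r
    using X that unfolding w by (simp add: field_simps)
  have wp: "w + X r = (eps + 1)*Y + e*(of_nat K - of_nat r)" if "r \<in> {1..K}" for r
    using X that unfolding w by (simp add: field_simps)
  have main: "(\<Prod>r\<in>{1..K}-{r0}. G (w - X r) * G (w + X r)) = P1 * P2
     \<and> (\<forall>s<K-1. exp (e + of_nat s * e) \<noteq> 1 \<and> exp (2*eps*Y + of_nat s * e) \<noteq> 1)"
  proof (cases "eps = 1")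
    case True
    hence r0': "r0 = 1" using r0 by simp
    have a: "(\<Prod>r\<in>{1..K}-{r0}. G (w - X r)) = P1" unfolding P1_def
    proof (rule prod.reindex_bij_witness[where i="\<lambda>s. s + 2" and j="\<lambda>r. r - 2"])
      fix r assume r: "r \<in> {1..K}-{r0}"
      thus "r - 2 + 2 = r" "r - 2 \<in> {..<K-1}" using r0' by auto
      have ofn: "of_nat (r - 2) = (of_nat r - 2 :: complex)" using r r0' by (simp add: of_nat_diff)
      have rin: "r \<in> {1..K}" using r by simp
      have "e + of_nat (r - 2) * e = w - X r" unfolding wm[OF rin] ofn True by (simp add: field_simps)
      thus "G (e + of_nat (r - 2) * e) = G (w - X r)" by (simp only:)
    next
      fix s assume "s \<in> {..<K-1}"
      thus "s + 2 - 2 = s" "s + 2 \<in> {1..K} - {r0}" using r0' by auto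
    qed
    have b: "(\<Prod>r\<in>{1..K}-{r0}. G (w + X r)) = P2" unfolding P2_def
    proof (rule prod.reindex_bij_witness[where i="\<lambda>s. K - s" and j="\<lambda>r. K - r"])
      fix r assume r: "r \<in> {1..K}-{r0}"
      thus "K - (K - r) = r" "K - r \<in> {..<K-1}" using r0' by auto
      have ofn: "of_nat (K - r) = (of_nat K - of_nat r :: complex)" using r by (simp add: of_nat_diff)
      have rin: "r \<in> {1..K}" using r by simp
      have "2*eps*Y + of_nat (K - r) * e = w + X r" unfolding wp[OF rin] ofn True by (simp add: field_simps)
      thus "G (2*eps*Y + of_nat (K - r) * e) = G (w + X r)" by (simp only:)
    next
      fix s assume "s \<in> {..<K-1}"
      thus "K - (K - s) = s" "K - s \<in> {1..K} - {r0}" using r0' by auto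
    qed
    have c: "\<forall>s<K-1. exp (e + of_nat s * e) \<noteq> 1 \<and> exp (2*eps*Y + of_nat s * e) \<noteq> 1"
    proof (intro allI impI conjI)
      fix s assume s: "s < K - 1"
      have r1: "s + 2 \<in> {1..K}-{r0}" using s r0' by auto
      have "w - X (s+2) = e + of_nat s * e" unfolding wm[OF DiffD1[OF r1]] True by (simp add: field_simps)
      thus "exp (e + of_nat s * e) \<noteq> 1" using nd r1 by metis
      have r2: "K - s \<in> {1..K}-{r0}" using s r0' by auto
      have ofn: "of_nat (K - s) = (of_nat K - of_nat s :: complex)" using s by (simp add: of_nat_diff)
      have "w + X (K - s) = 2*eps*Y + of_nat s * e" unfolding wp[OF DiffD1[OF r2]] ofn True by (simp add: field_simps)
      thus "exp (2*eps*Y + of_nat s * e) \<noteq> 1" using nd r2 by metis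
    qed
    show ?thesis using a b c by (simp add: prod.distrib)
  next
    case False
    hence em: "eps = -1" and r0': "r0 = K" using eps r0 by auto
    have a: "(\<Prod>r\<in>{1..K}-{r0}. G (w - X r)) = P2" unfolding P2_def
    proof (rule prod.reindex_bij_witness[where i="\<lambda>s. s + 1" and j="\<lambda>r. r - 1"])
      fix r assume r: "r \<in> {1..K}-{r0}"
      thus "r - 1 + 1 = r" "r - 1 \<in> {..<K-1}" using r0' by auto
      have ofn: "of_nat (r - 1) = (of_nat r - 1 :: complex)" using r by (simp add: of_nat_diff)
      have rin: "r \<in> {1..K}" using r by simp
      have "2*eps*Y + of_nat (r - 1) * e = w - X r" unfolding wm[OF rin] ofn em by (simp add: field_simps)
      thus "G (2*eps*Y + of_nat (r - 1) * e) = G (w - X r)" by (simp only:)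
    next
      fix s assume "s \<in> {..<K-1}"
      thus "s + 1 - 1 = s" "s + 1 \<in> {1..K} - {r0}" using r0' by auto
    qed
    have b: "(\<Prod>r\<in>{1..K}-{r0}. G (w + X r)) = P1" unfolding P1_def
    proof (rule prod.reindex_bij_witness[where i="\<lambda>s. K - 1 - s" and j="\<lambda>r. K - 1 - r"])
      fix r assume r: "r \<in> {1..K}-{r0}"
      thus "K - 1 - (K - 1 - r) = r" "K - 1 - r \<in> {..<K-1}" using r0' by auto
      have ofn: "of_nat (K - 1 - r) = (of_nat K - 1 - of_nat r :: complex)" using r r0' by (simp add: of_nat_diff)
      have rin: "r \<in> {1..K}" using r by simp
      have "e + of_nat (K - 1 - r) * e = w + X r" unfolding wp[OF rin] ofn em by (simp add: field_simps)
      thus "G (e + of_nat (K - 1 - r) * e) = G (w + X r)" by (simp only:)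
    next
      fix s assume "s \<in> {..<K-1}"
      thus "K - 1 - (K - 1 - s) = s" "K - 1 - s \<in> {1..K} - {r0}" using r0' by auto
    qed
    have c: "\<forall>s<K-1. exp (e + of_nat s * e) \<noteq> 1 \<and> exp (2*eps*Y + of_nat s * e) \<noteq> 1"
    proof (intro allI impI conjI)
      fix s assume s: "s < K - 1"
      have r1: "K - 1 - s \<in> {1..K}-{r0}" using s r0' by auto
      have ofn: "of_nat (K - 1 - s) = (of_nat K - 1 - of_nat s :: complex)" using s by (simp add: of_nat_diff)
      have "w + X (K - 1 - s) = e + of_nat s * e" unfolding wp[OF DiffD1[OF r1]] ofn em by (simp add: field_simps)
      thus "exp (e + of_nat s * e) \<noteq> 1" using nd r1 by metis
      have r2: "s + 1 \<in> {1..K}-{r0}" using s r0' by auto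
      have "w - X (s + 1) = 2*eps*Y + of_nat s * e" unfolding wm[OF DiffD1[OF r2]] em by (simp add: field_simps)
      thus "exp (2*eps*Y + of_nat s * e) \<noteq> 1" using nd r2 by metis
    qed
    show ?thesis using a b c by (simp add: prod.distrib mult.commute)
  qed
  have p1: "P1 = gfun e (exp (of_nat (K-1) * e/2)) 1" unfolding P1_def G_def
    by (rule tel) (use nde main in auto)
  have p2: "P2 = gfun (2*eps*Y) (exp (of_nat (K-1) * e/2)) 1" unfolding P2_def G_def
    by (rule tel) (use nd2 main in auto)
  have A: "exp (of_nat (K-1) * e/2) = exp (of_nat K*e/2) / exp (e/2)"
    by (simp only: exp_diff[symmetric]) (rule arg_cong[of _ _ exp], use K in \<open>simp add: of_nat_diff field_simps\<close>)
  have p1': "P1 = (exp (of_nat K*e/2) - inverse (exp (of_nat K*e/2))) / (exp (e/2) - inverse (exp (e/2)))"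
    unfolding p1 by (rule OBC[OF K nde])
  have "(\<Prod>r\<in>{1..K}-{r0}. G (w - X r) * G (w + X r)) = P1 * P2" using main by blast
  thus ?thesis unfolding G_def p1' p2 A .
qed


lemma HfS: "Hf K e (v + e*(of_nat K - 1)/2) = gfun v (exp (of_nat K*e/2)) 1"
proof -
  have "exp (of_nat K*e/4) * exp (e/4) * exp (e*(of_nat K - 1)/2/2) = exp (of_nat K*e/2)"
    by (simp only: exp_add[symmetric]) (rule arg_cong[of _ _ exp], simp add: field_simps)
  moreover have "exp (e/4) / exp (of_nat K*e/4) * exp (e*(of_nat K - 1)/2/2) = 1"
  proof -
    have "exp (e/4) / exp (of_nat K*e/4) * exp (e*(of_nat K - 1)/2/2) = exp (e/4 - of_nat K*e/4 + e*(of_nat K - 1)/2/2)"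
      by (simp only: exp_add exp_diff)
    also have "e/4 - of_nat K*e/4 + e*(of_nat K - 1)/2/2 = 0" by (simp add: field_simps)
    finally show ?thesis by simp
  qed
  ultimately show ?thesis unfolding Hf_def gfun_shift by simp
qed

lemma GS: "gfun (v + e*(of_nat K - 1)/2) (exp (e/2)) 1
   = gfun v (exp (of_nat K*e/4) * exp (e/4)) (exp (of_nat K*e/4) / exp (e/4))"
proof -
  have "exp (e/2) * exp (e*(of_nat K - 1)/2/2) = exp (of_nat K*e/4) * exp (e/4)"
    by (simp only: exp_add[symmetric]) (rule arg_cong[of _ _ exp], simp add: field_simps)
  moreover have "1 * exp (e*(of_nat K - 1)/2/2) = exp (of_nat K*e/4) / exp (e/4)"
    by (simp only: exp_diff[symmetric] mult_1) (rule arg_cong[of _ _ exp], simp add: field_simps)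
  ultimately show ?thesis unfolding gfun_shift by simp
qed

lemma TS: "gfun (v + e*(of_nat K - 1)/2) tn 1
   = gfun v (exp (of_nat K*e/4) / exp (e/4) * tn) (exp (of_nat K*e/4) / exp (e/4))"
proof -
  have "exp (e*(of_nat K - 1)/2/2) = exp (of_nat K*e/4) / exp (e/4)"
    by (simp only: exp_diff[symmetric]) (rule arg_cong[of _ _ exp], simp add: field_simps)
  thus ?thesis unfolding gfun_shift by (simp add: mult.commute)
qed

lemma prod_if_remove: "finite A \<Longrightarrow> (\<Prod>j\<in>A. if j = i then 1 else f j) = (\<Prod>j\<in>A-{i}. f j)"
proof -
  assume A: "finite A"
  have "(\<Prod>j\<in>A. if j = i then 1 else f j) = (\<Prod>j\<in>A-{i}. if j = i then 1 else f j)"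
    by (rule prod.mono_neutral_right[OF A]) auto
  also have "\<dots> = (\<Prod>j\<in>A-{i}. f j)" by (rule prod.cong) auto
  finally show ?thesis .
qed

context S begin

lemma block_tel:
  assumes l: "1 \<le> l" "l \<le> m"
    and nd: "\<forall>r\<in>{1..k}. exp (w - x (pos l r)) \<noteq> 1 \<and> exp (w + x (pos l r)) \<noteq> 1"
  shows "(\<Prod>r=1..k. gfun (w - x (pos l r)) (exp (eta/2)) 1 * gfun (w + x (pos l r)) (exp (eta/2)) 1)
       = Hf k eta (w - y l) * Hf k eta (w + y l)"
proof -
  have xb: "x (pos l r) = y l + eta*((of_nat k+1)/2 - of_nat r)" if "r \<in> {1..k}" for r
    using xblock[OF l] that by simp
  have pa: "(\<Prod>r=1..k. gfun (w - x (pos l r)) (exp (eta/2)) 1) = Hf k eta (w - y l)"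
  proof -
    have "(\<Prod>r=1..k. gfun (w - x (pos l r)) (exp (eta/2)) 1)
        = (\<Prod>r=1..k. gfun ((w - y l) - eta*((of_nat k+1)/2 - of_nat r)) (exp (eta/2)) 1)"
      by (rule prod.cong[OF refl]) (simp add: xb algebra_simps)
    also have "\<dots> = Hf k eta (w - y l)"
    proof (rule telH[OF k1], intro ballI)
      fix r assume r: "r \<in> {1..k}"
      have "exp (w - x (pos l r)) \<noteq> 1" using nd r by blast
      thus "exp ((w - y l) - eta*((of_nat k+1)/2 - of_nat r)) \<noteq> 1" using xb[OF r] by (simp add: algebra_simps)
    qed
    finally show ?thesis .
  qed
  have pb: "(\<Prod>r=1..k. gfun (w + x (pos l r)) (exp (eta/2)) 1) = Hf k eta (w + y l)"
  proof -
    have "(\<Prod>r=1..k. gfun (w + x (pos l r)) (exp (eta/2)) 1)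
        = (\<Prod>r=1..k. gfun (w + x (pos l (k + 1 - r))) (exp (eta/2)) 1)"
      by (rule prod.atLeastAtMost_rev)
    also have "\<dots> = (\<Prod>r=1..k. gfun ((w + y l) - eta*((of_nat k+1)/2 - of_nat r)) (exp (eta/2)) 1)"
    proof (rule prod.cong[OF refl])
      fix r assume r: "r \<in> {1..k}"
      hence r': "k + 1 - r \<in> {1..k}" by auto
      have ofn: "of_nat (k + 1 - r) = (of_nat k + 1 - of_nat r :: complex)" using r by (simp add: of_nat_diff)
      have "w + x (pos l (k + 1 - r)) = (w + y l) - eta*((of_nat k+1)/2 - of_nat r)"
        unfolding xb[OF r'] ofn by (simp add: algebra_simps)
      thus "gfun (w + x (pos l (k + 1 - r))) (exp (eta/2)) 1 = gfun ((w + y l) - eta*((of_nat k+1)/2 - of_nat r)) (exp (eta/2)) 1"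
        by (simp only:)
    qed
    also have "\<dots> = Hf k eta (w + y l)"
    proof (rule telH[OF k1], intro ballI)
      fix r assume r: "r \<in> {1..k}"
      hence r': "k + 1 - r \<in> {1..k}" by auto
      have "exp (w + x (pos l (k + 1 - r))) \<noteq> 1" using nd r' by blast
      moreover have ofn: "of_nat (k + 1 - r) = (of_nat k + 1 - of_nat r :: complex)" using r by (simp add: of_nat_diff)
      moreover have "w + x (pos l (k + 1 - r)) = (w + y l) - eta*((of_nat k+1)/2 - of_nat r)"
        unfolding xb[OF r'] ofn by (simp add: algebra_simps)
      ultimately show "exp ((w + y l) - eta*((of_nat k+1)/2 - of_nat r)) \<noteq> 1" by (simp only: not_False_eq_True)
    qed
    finally show ?thesis .
  qed
  show ?thesis unfolding prod.distrib pa pb ..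
qed

lemma genA: "i \<in> {1..n} \<Longrightarrow> eps \<in> signs \<Longrightarrow> j \<in> {1..n} - {i} \<Longrightarrow>
    exp (eps * x i - x j) \<noteq> 1 \<and> exp (eps * x i + x j) \<noteq> 1"
  using gen unfolding generic_pt_def Let_def gok_def by auto

lemma gen2: "l \<in> {1..m} \<Longrightarrow> eps \<in> signs \<Longrightarrow> exp (2 * eps * y l) \<noteq> 1"
  using gen unfolding generic_pt_def Let_def gok_def y_def by auto

lemma Mterm_split: "i \<in> {1..n} \<Longrightarrow> Mterm n (exp (eta/2)) tn i eps x =
   (\<Prod>j\<in>{1..N1}. if j = i then 1 else gfun (eps * x i - x j) (exp (eta/2)) 1 * gfun (eps * x i + x j) (exp (eta/2)) 1)
 * (\<Prod>l=1..m. \<Prod>r=1..k. if pos l r = i then 1 else gfun (eps * x i - x (pos l r)) (exp (eta/2)) 1 * gfun (eps * x i + x (pos l r)) (exp (eta/2)) 1)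
 * gfun (eps * x i) tn 1"
  unfolding Mterm_def prod_if_remove[OF finite_atLeastAtMost, symmetric] by (simp only: prod_split)

lemma Mterm_D:
  assumes i: "i \<in> {1..N1}" and eps: "eps \<in> signs"
  shows "Mterm n (exp (eta/2)) tn i eps x = Acoef n m k eta tn i eps x"
proof -
  have iN: "i \<in> {1..n}" using i n_eq by auto
  have bl: "(\<Prod>r=1..k. if pos l r = i then 1 else gfun (eps * x i - x (pos l r)) (exp (eta/2)) 1 * gfun (eps * x i + x (pos l r)) (exp (eta/2)) 1)
     = Hf k eta (eps * x i - y l) * Hf k eta (eps * x i + y l)" if l: "l \<in> {1..m}" for l
  proof -
    have "(\<Prod>r=1..k. if pos l r = i then 1 else gfun (eps * x i - x (pos l r)) (exp (eta/2)) 1 * gfun (eps * x i + x (pos l r)) (exp (eta/2)) 1)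
       = (\<Prod>r=1..k. gfun (eps * x i - x (pos l r)) (exp (eta/2)) 1 * gfun (eps * x i + x (pos l r)) (exp (eta/2)) 1)"
    proof (rule prod.cong[OF refl])
      fix r assume "r \<in> {1..k}"
      hence "N1 < pos l r" by (intro pos_gt) simp
      thus "(if pos l r = i then 1 else gfun (eps * x i - x (pos l r)) (exp (eta/2)) 1 * gfun (eps * x i + x (pos l r)) (exp (eta/2)) 1)
         = gfun (eps * x i - x (pos l r)) (exp (eta/2)) 1 * gfun (eps * x i + x (pos l r)) (exp (eta/2)) 1"
        using i by auto
    qed
    also have "\<dots> = Hf k eta (eps * x i - y l) * Hf k eta (eps * x i + y l)"
    proof (rule block_tel)
      show "1 \<le> l" "l \<le> m" using l by auto
      show "\<forall>r\<in>{1..k}. exp (eps * x i - x (pos l r)) \<noteq> 1 \<and> exp (eps * x i + x (pos l r)) \<noteq> 1"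
      proof
        fix r assume r: "r \<in> {1..k}"
        have "pos l r \<le> n" "N1 < pos l r" using r l by (intro pos_le pos_gt; simp)+
        hence "pos l r \<in> {1..n} - {i}" using i by auto
        thus "exp (eps * x i - x (pos l r)) \<noteq> 1 \<and> exp (eps * x i + x (pos l r)) \<noteq> 1"
          by (rule genA[OF iN eps])
      qed
    qed
    finally show ?thesis .
  qed
  have bl2: "(\<Prod>l=1..m. \<Prod>r=1..k. if pos l r = i then 1 else gfun (eps * x i - x (pos l r)) (exp (eta/2)) 1 * gfun (eps * x i + x (pos l r)) (exp (eta/2)) 1)
     = (\<Prod>l=1..m. Hf k eta (eps * x i - y l) * Hf k eta (eps * x i + y l))"
    by (rule prod.cong[OF refl], rule bl) simp
  show ?thesis
    unfolding Mterm_split[OF iN] prod_if_remove[OF finite_atLeastAtMost] bl2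
    unfolding Acoef_def Let_def Hf_def y_def N1_def by simp
qed

end

lemma signs_iff: "eps \<in> signs \<longleftrightarrow> eps = 1 \<or> eps = -1" unfolding signs_def by auto

context S begin

lemma Mterm_zero:
  assumes l: "l \<in> {1..m}" and r: "r \<in> {1..k}" and eps: "eps \<in> signs"
    and nr: "r \<noteq> (if eps = 1 then 1 else k)"
  shows "Mterm n (exp (eta/2)) tn (pos l r) eps x = 0"
proof -
  let ?i = "pos l r"
  have "(\<Prod>j\<in>{1..n}-{?i}. gfun (eps * x ?i - x j) (exp (eta/2)) 1 * gfun (eps * x ?i + x j) (exp (eta/2)) 1) = 0"
  proof (rule prod_zero)
    show "finite ({1..n}-{?i})" by simp
    show "\<exists>j\<in>{1..n}-{?i}. gfun (eps * x ?i - x j) (exp (eta/2)) 1 * gfun (eps * x ?i + x j) (exp (eta/2)) 1 = 0"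
    proof (cases "eps = 1")
      case True
      hence r2: "r \<ge> 2" using nr r by auto
      define j where "j = pos l (r - 1)"
      have ij: "?i = Suc j" unfolding j_def using r2 pos_Suc[of l "r-1"] by (simp add: Suc_diff_Suc numeral_2_eq_2)
      have "pos l (r-1) \<le> n" "N1 < pos l (r-1)" using r l r2 by (intro pos_le pos_gt; simp)+
      hence jin: "j \<in> {1..n}-{?i}" using ij unfolding j_def by auto
      have "x j - x (pos l (Suc (r-1))) = eta" unfolding j_def using l r r2 by (intro xdiff) auto
      hence "eps * x ?i - x j = - eta" using True r2 by (simp add: Suc_diff_Suc numeral_2_eq_2 algebra_simps)
      hence "gfun (eps * x ?i - x j) (exp (eta/2)) 1 = 0" using gzero by simp
      thus ?thesis using jin by auto
    next
      case False
      hence em: "eps = -1" using eps signs_iff by auto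
      hence rk: "r < k" using nr r False by auto
      define j where "j = pos l (Suc r)"
      have ij: "j = Suc ?i" unfolding j_def using pos_Suc by simp
      have "pos l (Suc r) \<le> n" "N1 < pos l (Suc r)" using r l rk by (intro pos_le pos_gt; simp)+
      hence jin: "j \<in> {1..n}-{?i}" using ij unfolding j_def by auto
      have "x ?i - x j = eta" unfolding j_def using l r rk by (intro xdiff) auto
      hence "eps * x ?i + x j = - eta" using em by (simp add: algebra_simps)
      hence "gfun (eps * x ?i + x j) (exp (eta/2)) 1 = 0" using gzero by simp
      thus ?thesis using jin by auto
    qed
  qed
  thus ?thesis unfolding Mterm_def by simp
qed

lemma Mterm_B:
  assumes l: "l \<in> {1..m}" and eps: "eps \<in> signs"
  shows "Mterm n (exp (eta/2)) tn (pos l (if eps = 1 then 1 else k)) eps x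
    = (exp (of_nat k*eta/2) - inverse (exp (of_nat k*eta/2))) / (exp (eta/2) - inverse (exp (eta/2)))
      * Bcoef n m k eta tn l eps x"
proof -
  define r0 where "r0 = (if eps = 1 then 1 else k)"
  define i where "i = pos l r0"
  define d where "d = eta*(of_nat k - 1)/2"
  define F where "F = (\<lambda>j. gfun (eps * x i - x j) (exp (eta/2)) 1 * gfun (eps * x i + x j) (exp (eta/2)) 1)"
  have r0in: "r0 \<in> {1..k}" unfolding r0_def using k1 by auto
  have l1: "1 \<le> l" "l \<le> m" using l by auto
  have ile: "i \<le> n" "N1 < i" unfolding i_def using r0in l by (intro pos_le pos_gt; simp)+
  hence iN: "i \<in> {1..n}" by auto
  have wx: "eps * x i = eps * y l + d"
  proof (cases "eps = 1")
    case True
    hence "r0 = 1" unfolding r0_def by simp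
    thus ?thesis using xblock[OF l1, of 1] k1 True unfolding i_def d_def by (simp add: field_simps)
  next
    case False
    hence "eps = -1" "r0 = k" unfolding r0_def using eps signs_iff by auto
    thus ?thesis using xblock[OF l1, of k] k1 unfolding i_def d_def by (simp add: field_simps)
  qed
  have Dp: "(\<Prod>j\<in>{1..N1}. if j = i then 1 else F j)
     = (\<Prod>j=1..N1. gfun (eps * y l - x j) (exp (of_nat k*eta/4) * exp (eta/4)) (exp (of_nat k*eta/4) / exp (eta/4))
                 * gfun (eps * y l + x j) (exp (of_nat k*eta/4) * exp (eta/4)) (exp (of_nat k*eta/4) / exp (eta/4)))"
  proof (rule prod.cong[OF refl])
    fix j assume j: "j \<in> {1..N1}"
    have a1: "eps * x i - x j = (eps * y l - x j) + eta*(of_nat k - 1)/2" using wx unfolding d_def by simp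
    have a2: "eps * x i + x j = (eps * y l + x j) + eta*(of_nat k - 1)/2" using wx unfolding d_def by simp
    show "(if j = i then 1 else F j) = gfun (eps * y l - x j) (exp (of_nat k*eta/4) * exp (eta/4)) (exp (of_nat k*eta/4) / exp (eta/4))
                 * gfun (eps * y l + x j) (exp (of_nat k*eta/4) * exp (eta/4)) (exp (of_nat k*eta/4) / exp (eta/4))"
      using j ile unfolding F_def a1 a2 GS by auto
  qed
  define Phi where "Phi = (\<lambda>l'. \<Prod>r=1..k. if pos l' r = i then 1 else F (pos l' r))"
  have own: "Phi l = (exp (of_nat k*eta/2) - inverse (exp (of_nat k*eta/2))) / (exp (eta/2) - inverse (exp (eta/2)))
      * gfun (2*eps*y l) (exp (of_nat k*eta/2) / exp (eta/2)) 1"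
  proof -
    have "Phi l = (\<Prod>r=1..k. if r = r0 then 1 else F (pos l r))"
      unfolding Phi_def
    proof (rule prod.cong[OF refl])
      fix r assume r: "r \<in> {1..k}"
      have "pos l r = i \<longleftrightarrow> r = r0" unfolding i_def using pos_inj[of r r0 l l] r r0in l1 by auto
      thus "(if pos l r = i then 1 else F (pos l r)) = (if r = r0 then 1 else F (pos l r))" by simp
    qed
    also have "\<dots> = (\<Prod>r\<in>{1..k}-{r0}. F (pos l r))" by (rule prod_if_remove) simp
    also have "\<dots> = (exp (of_nat k*eta/2) - inverse (exp (of_nat k*eta/2))) / (exp (eta/2) - inverse (exp (eta/2)))
      * gfun (2*eps*y l) (exp (of_nat k*eta/2) / exp (eta/2)) 1"
      unfolding F_def
    proof (rule OB[where K=k and Y="y l" and X="\<lambda>r. x (pos l r)"])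
      show "k \<ge> 1" by (rule k1)
      show "eps = 1 \<or> eps = -1" using eps signs_iff by auto
      show "r0 = (if eps = 1 then 1 else k)" by (rule r0_def)
      show "\<forall>r\<in>{1..k}. x (pos l r) = y l + eta * ((of_nat k + 1) / 2 - of_nat r)"
        using xblock[OF l1] by auto
      show "eps * x i = eps * y l + eta * (of_nat k - 1) / 2" using wx unfolding d_def .
      show "\<forall>r\<in>{1..k} - {r0}. exp (eps * x i - x (pos l r)) \<noteq> 1 \<and> exp (eps * x i + x (pos l r)) \<noteq> 1"
      proof
        fix r assume r: "r \<in> {1..k} - {r0}"
        have "pos l r \<le> n" "N1 < pos l r" using r l1 by (intro pos_le pos_gt; simp)+
        moreover have "pos l r \<noteq> i" unfolding i_def using pos_inj[of r r0 l l] r r0in l1 by auto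
        ultimately have "pos l r \<in> {1..n} - {i}" by auto
        thus "exp (eps * x i - x (pos l r)) \<noteq> 1 \<and> exp (eps * x i + x (pos l r)) \<noteq> 1"
          by (rule genA[OF iN eps])
      qed
      show "exp (2 * eps * y l) \<noteq> 1" by (rule gen2[OF l eps])
      show "exp eta \<noteq> 1" by (rule eta_ne)
    qed
    finally show ?thesis .
  qed
  have oth: "Phi l' = gfun (eps * y l - y l') (exp (of_nat k*eta/2)) 1 * gfun (eps * y l + y l') (exp (of_nat k*eta/2)) 1"
    if l': "l' \<in> {1..m} - {l}" for l'
  proof -
    have l1': "1 \<le> l'" "l' \<le> m" using l' by auto
    have "Phi l' = (\<Prod>r=1..k. F (pos l' r))"
      unfolding Phi_def
    proof (rule prod.cong[OF refl])
      fix r assume r: "r \<in> {1..k}"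
      have "pos l' r \<noteq> i" unfolding i_def using pos_inj[of r r0 l' l] r r0in l1 l' by auto
      thus "(if pos l' r = i then 1 else F (pos l' r)) = F (pos l' r)" by simp
    qed
    also have "\<dots> = Hf k eta (eps * x i - y l') * Hf k eta (eps * x i + y l')"
      unfolding F_def
    proof (rule block_tel[OF l1'])
      show "\<forall>r\<in>{1..k}. exp (eps * x i - x (pos l' r)) \<noteq> 1 \<and> exp (eps * x i + x (pos l' r)) \<noteq> 1"
      proof
        fix r assume r: "r \<in> {1..k}"
        have "pos l' r \<le> n" "N1 < pos l' r" using r l1' by (intro pos_le pos_gt; simp)+
        moreover have "pos l' r \<noteq> i" unfolding i_def using pos_inj[of r r0 l' l] r r0in l1 l' by auto
        ultimately have "pos l' r \<in> {1..n} - {i}" by auto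
        thus "exp (eps * x i - x (pos l' r)) \<noteq> 1 \<and> exp (eps * x i + x (pos l' r)) \<noteq> 1"
          by (rule genA[OF iN eps])
      qed
    qed
    also have "eps * x i - y l' = (eps * y l - y l') + eta*(of_nat k - 1)/2" using wx unfolding d_def by simp
    also have "eps * x i + y l' = (eps * y l + y l') + eta*(of_nat k - 1)/2" using wx unfolding d_def by simp
    finally show ?thesis unfolding HfS .
  qed
  have blocks: "(\<Prod>l'=1..m. Phi l') = Phi l * (\<Prod>l'\<in>{1..m}-{l}. gfun (eps * y l - y l') (exp (of_nat k*eta/2)) 1 * gfun (eps * y l + y l') (exp (of_nat k*eta/2)) 1)"
    using prod.remove[OF finite_atLeastAtMost l, of Phi] oth by simp
  have tnp: "gfun (eps * x i) tn 1 = gfun (eps * y l) (exp (of_nat k*eta/4) / exp (eta/4) * tn) (exp (of_nat k*eta/4) / exp (eta/4))"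
    unfolding wx d_def TS ..
  have M: "Mterm n (exp (eta/2)) tn i eps x = (\<Prod>j\<in>{1..N1}. if j = i then 1 else F j) * (\<Prod>l'=1..m. Phi l') * gfun (eps * x i) tn 1"
    unfolding Mterm_split[OF iN] F_def Phi_def ..
  show ?thesis
    unfolding r0_def[symmetric] i_def[symmetric] M Dp blocks own tnp
    unfolding Bcoef_def Let_def y_def N1_def by (simp add: ac_simps)
qed

end

context S begin

lemma MLam_fin: "finite (MLam n)"
proof -
  have "MLam n \<subseteq> (\<lambda>(i,eps). (\<lambda>j. eps * evec i j)) ` ({1..n} \<times> signs)"
    unfolding MLam_def by auto
  moreover have "finite ({1..n} \<times> signs)" unfolding signs_def by simp
  ultimately show ?thesis using finite_subset by blast
qed

lemma restr_eq:
  "restr_coef n m k (MLam n) (Mcoef n (exp (eta/2)) tn) lam' x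
   = (\<Sum>i=1..n. \<Sum>eps\<in>signs. if proj n m k (\<lambda>j. eps * evec i j) = lam' then Mterm n (exp (eta/2)) tn i eps x else 0)"
proof -
  define L where "L = {lam \<in> MLam n. proj n m k lam = lam'}"
  have fL: "finite L" unfolding L_def using MLam_fin by simp
  have "restr_coef n m k (MLam n) (Mcoef n (exp (eta/2)) tn) lam' x
      = (\<Sum>lam\<in>L. \<Sum>i=1..n. \<Sum>eps\<in>signs. if lam = (\<lambda>j. eps * evec i j) then Mterm n (exp (eta/2)) tn i eps x else 0)"
    unfolding restr_coef_def Mcoef_def L_def ..
  also have "\<dots> = (\<Sum>i=1..n. \<Sum>eps\<in>signs. \<Sum>lam\<in>L. if lam = (\<lambda>j. eps * evec i j) then Mterm n (exp (eta/2)) tn i eps x else 0)"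
    by (subst sum.swap, rule sum.cong[OF refl], subst sum.swap, rule refl)
  also have "\<dots> = (\<Sum>i=1..n. \<Sum>eps\<in>signs. if proj n m k (\<lambda>j. eps * evec i j) = lam' then Mterm n (exp (eta/2)) tn i eps x else 0)"
  proof (intro sum.cong[OF refl])
    fix i eps assume i: "i \<in> {1..n}" and eps: "eps \<in> signs"
    have "(\<lambda>j. eps * evec i j) \<in> MLam n" unfolding MLam_def using i eps by blast
    hence "(\<lambda>j. eps * evec i j) \<in> L \<longleftrightarrow> proj n m k (\<lambda>j. eps * evec i j) = lam'" unfolding L_def by simp
    thus "(\<Sum>lam\<in>L. if lam = (\<lambda>j. eps * evec i j) then Mterm n (exp (eta/2)) tn i eps x else 0)
       = (if proj n m k (\<lambda>j. eps * evec i j) = lam' then Mterm n (exp (eta/2)) tn i eps x else 0)"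
      using fL by simp
  qed
  finally show ?thesis .
qed

lemma block_sum:
  assumes l: "l \<in> {1..m}" and eps: "eps \<in> signs"
  shows "(\<Sum>r=1..k. Mterm n (exp (eta/2)) tn (pos l r) eps x)
    = (exp (of_nat k*eta/2) - inverse (exp (of_nat k*eta/2))) / (exp (eta/2) - inverse (exp (eta/2)))
      * Bcoef n m k eta tn l eps x"
proof -
  define r0 where "r0 = (if eps = 1 then 1 else k)"
  have r0in: "r0 \<in> {1..k}" unfolding r0_def using k1 by auto
  have "(\<Sum>r=1..k. Mterm n (exp (eta/2)) tn (pos l r) eps x)
      = (\<Sum>r=1..k. if r = r0 then Mterm n (exp (eta/2)) tn (pos l r0) eps x else 0)"
  proof (rule sum.cong[OF refl])
    fix r assume r: "r \<in> {1..k}"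
    show "Mterm n (exp (eta/2)) tn (pos l r) eps x = (if r = r0 then Mterm n (exp (eta/2)) tn (pos l r0) eps x else 0)"
      using Mterm_zero[OF l r eps] unfolding r0_def by auto
  qed
  also have "\<dots> = Mterm n (exp (eta/2)) tn (pos l r0) eps x" using r0in by simp
  finally show ?thesis unfolding r0_def using Mterm_B[OF l eps] by simp
qed

lemma final: "restr_coef n m k (MLam n) (Mcoef n (exp (eta/2)) tn) lam' x = RHScoef n m k eta tn lam' x"
proof -
  define C where "C = (exp (of_nat k*eta/2) - inverse (exp (of_nat k*eta/2))) / (exp (eta/2) - inverse (exp (eta/2)))"
  define T where "T = (\<lambda>i. \<Sum>eps\<in>signs. if proj n m k (\<lambda>j. eps * evec i j) = lam' then Mterm n (exp (eta/2)) tn i eps x else 0)"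
  have "restr_coef n m k (MLam n) (Mcoef n (exp (eta/2)) tn) lam' x = sum T {1..n}"
    unfolding restr_eq T_def ..
  also have "\<dots> = sum T {1..N1} + (\<Sum>l=1..m. \<Sum>r=1..k. T (pos l r))" by (rule sum_split)
  also have "sum T {1..N1} = (\<Sum>i=1..N1. \<Sum>eps\<in>signs. if lam' = (\<lambda>j. eps * evec i j) then Acoef n m k eta tn i eps x else 0)"
    unfolding T_def
  proof (intro sum.cong[OF refl])
    fix i eps assume i: "i \<in> {1..N1}" and eps: "eps \<in> signs"
    show "(if proj n m k (\<lambda>j. eps * evec i j) = lam' then Mterm n (exp (eta/2)) tn i eps x else 0)
      = (if lam' = (\<lambda>j. eps * evec i j) then Acoef n m k eta tn i eps x else 0)"
      unfolding proj_D[OF i] Mterm_D[OF i eps] by auto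
  qed
  also have "(\<Sum>l=1..m. \<Sum>r=1..k. T (pos l r))
     = (\<Sum>l=1..m. \<Sum>eps\<in>signs. if lam' = (\<lambda>j. eps * ublock n m k l j) then C * Bcoef n m k eta tn l eps x else 0)"
  proof (rule sum.cong[OF refl])
    fix l assume l: "l \<in> {1..m}"
    have "(\<Sum>r=1..k. T (pos l r)) = (\<Sum>r=1..k. \<Sum>eps\<in>signs. if (\<lambda>j. eps * ublock n m k l j) = lam' then Mterm n (exp (eta/2)) tn (pos l r) eps x else 0)"
      unfolding T_def
    proof (intro sum.cong[OF refl])
      fix r eps assume r: "r \<in> {1..k}" and eps: "eps \<in> signs"
      have "proj n m k (\<lambda>j. eps * evec (pos l r) j) = (\<lambda>j. eps * ublock n m k l j)"
        using l r by (intro proj_B) auto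
      thus "(if proj n m k (\<lambda>j. eps * evec (pos l r) j) = lam' then Mterm n (exp (eta/2)) tn (pos l r) eps x else 0)
        = (if (\<lambda>j. eps * ublock n m k l j) = lam' then Mterm n (exp (eta/2)) tn (pos l r) eps x else 0)" by simp
    qed
    also have "\<dots> = (\<Sum>eps\<in>signs. \<Sum>r=1..k. if (\<lambda>j. eps * ublock n m k l j) = lam' then Mterm n (exp (eta/2)) tn (pos l r) eps x else 0)"
      by (rule sum.swap)
    also have "\<dots> = (\<Sum>eps\<in>signs. if lam' = (\<lambda>j. eps * ublock n m k l j) then C * Bcoef n m k eta tn l eps x else 0)"
    proof (rule sum.cong[OF refl])
      fix eps assume eps: "eps \<in> signs"
      show "(\<Sum>r=1..k. if (\<lambda>j. eps * ublock n m k l j) = lam' then Mterm n (exp (eta/2)) tn (pos l r) eps x else 0)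
        = (if lam' = (\<lambda>j. eps * ublock n m k l j) then C * Bcoef n m k eta tn l eps x else 0)"
        using block_sum[OF l eps] unfolding C_def by auto
    qed
    finally show "(\<Sum>r=1..k. T (pos l r)) = (\<Sum>eps\<in>signs. if lam' = (\<lambda>j. eps * ublock n m k l j) then C * Bcoef n m k eta tn l eps x else 0)" .
  qed
  also have "\<dots> = C * (\<Sum>l=1..m. \<Sum>eps\<in>signs. if lam' = (\<lambda>j. eps * ublock n m k l j) then Bcoef n m k eta tn l eps x else 0)"
    by (simp add: sum_distrib_left if_distrib cong: if_cong)
  finally show ?thesis unfolding RHScoef_def Let_def C_def N1_def by simp
qed

end

lemma exp_ne:
  fixes k :: nat and eta1 :: complex
  assumes "k \<ge> 1" and h: "\<forall>r\<in>\<rat>. of_nat k * eta1 \<noteq> \<i> * complex_of_real (pi * r)"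
  shows "exp eta1 \<noteq> 1"
proof
  assume "exp eta1 = 1"
  then obtain z :: int where z: "Re eta1 = 0" "Im eta1 = of_int (2*z) * pi" unfolding exp_eq_1 by blast
  have "of_nat k * eta1 = \<i> * complex_of_real (pi * of_int (2*z*int k))"
    using z by (simp add: complex_eq_iff)
  moreover have "(of_int (2*z*int k) :: real) \<in> \<rat>" by simp
  ultimately show False using h by blast
qed

theorem mainTheorem16:
  fixes n m k :: nat and eta1 tn :: complex
  assumes "k \<ge> 1" and "m * k \<le> n"
    and "\<forall>r\<in>\<rat>. of_nat k * eta1 \<noteq> \<i> * complex_of_real (pi * r)"
    and "tn \<noteq> 0"
  shows "\<forall>x\<in>D0 n m k eta1. generic_pt n m k eta1 x \<longrightarrow>
           (\<forall>lam'. restr_coef n m k (MLam n) (Mcoef n (exp (eta1/2)) tn) lam' x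
                   = RHScoef n m k eta1 tn lam' x)"
proof (intro ballI impI allI)
  fix x lam' assume x: "x \<in> D0 n m k eta1" and g: "generic_pt n m k eta1 x"
  interpret S n m k eta1 tn x
    using assms(1,2) x g exp_ne[OF assms(1,3)] by unfold_locales
  show "restr_coef n m k (MLam n) (Mcoef n (exp (eta1/2)) tn) lam' x = RHScoef n m k eta1 tn lam' x"
    by (rule final)
qed

end
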